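(* In the setting described in the context, let $\epsilon\in(0,1)$, and suppose $r\le\frac\Delta2$ and \[pn_{\min}\ge 16\max\Big\{1,\Big(\frac{r}{\Delta/2-r}\Big)^2\Big\}\log\frac{k(d+2)}{\epsilon}.\] Then with probability at least $1-\epsilon$, simultaneously for every $S,T\in\Gamma$ with $S\ne T$ and every $i\in S$, $\|x_i-c_{S'}\|<\|x_i-c_{T'}\|$.
   Context: Let $X=\{x_i\}_{i\in[n]}$ be points in $\mathbb{R}^d$ and $\Gamma$ a partition of $[n]$ into $k$ nonempty sets. For nonempty $S\subseteq[n]$, $c_S:=\frac1{|S|}\sum_{i\in S}x_i$. Let $\Delta:=\min_{S\ne T\in\Gamma}\|c_S-c_T\|$, $r:=\max_{S\in\Gamma}\max_{i\in S}\|x_i-c_S\|$, $n_{\min}:=\min_{S\in\Gamma}|S|$. Let $p\in(0,1]$ and let $W\subseteq[n]$ be random, containing each index independently with probability $p$; for $S\in\Gamma$ put $S':=S\cap W$. The quantity $\frac{r}{\Delta/2-r}$ is interpreted as $+\infty$ when $r=\Delta/2$. Logarithms are natural. *)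

theory Defs
  imports "HOL-Analysis.Analysis" "HOL-Probability.Probability" "HOL-Library.Disjoint_Sets"
begin

definition centroid :: "(nat \<Rightarrow> 'a::real_vector) \<Rightarrow> nat set \<Rightarrow> 'a" where
  "centroid x S = (1 / real (card S)) *\<^sub>R (\<Sum>i\<in>S. x i)"

definition min_sep :: "(nat \<Rightarrow> 'a::real_normed_vector) \<Rightarrow> nat set set \<Rightarrow> real" where
  "min_sep x \<Gamma> = Min {norm (centroid x S - centroid x T) | S T. S \<in> \<Gamma> \<and> T \<in> \<Gamma> \<and> S \<noteq> T}"

definition max_rad :: "(nat \<Rightarrow> 'a::real_normed_vector) \<Rightarrow> nat set set \<Rightarrow> real" where
  "max_rad x \<Gamma> = Max {norm (x i - centroid x S) | S i. S \<in> \<Gamma> \<and> i \<in> S}"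

definition min_size :: "nat set set \<Rightarrow> nat" where
  "min_size \<Gamma> = Min (card ` \<Gamma>)"

definition sep_ratio :: "real \<Rightarrow> real \<Rightarrow> ereal" where
  "sep_ratio r \<Delta> = (if r = \<Delta> / 2 then \<infinity> else ereal (r / (\<Delta> / 2 - r)))"

text \<open>Random subset W of {0..<n}: each index independently with probability p.\<close>
definition sample_pmf :: "nat \<Rightarrow> real \<Rightarrow> (nat \<Rightarrow> bool) pmf" where
  "sample_pmf n p = Pi_pmf {..<n} False (\<lambda>_. bernoulli_pmf p)"

end

theory Submission
  imports Defs
begin


lemma cosh_sqrt_sums:
  fixes x :: real assumes "0 \<le> x"
  shows "(\<lambda>n. if even n then x ^ (n div 2) / fact n else 0) sums cosh (sqrt x)"
proof -
  have "(\<lambda>n. if even n then sqrt x ^ n /\<^sub>R fact n else 0) sums cosh (sqrt x)"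
    by (rule cosh_converges)
  moreover have "(if even n then sqrt x ^ n /\<^sub>R fact n else 0) = (if even n then x ^ (n div 2) / fact n else 0)" for n
  proof (cases "even n")
    case True
    then obtain k where k: "n = 2 * k" by blast
    have "sqrt x ^ n = (sqrt x ^ 2) ^ k" unfolding k by (simp add: power_mult)
    also have "\<dots> = x ^ k" using assms by simp
    finally show ?thesis using True k by (simp add: divide_inverse mult.commute)
  qed simp
  ultimately show ?thesis by simp
qed

lemma pow_convex0:
  fixes x y t :: real
  assumes "0 \<le> x" "0 \<le> y" "0 \<le> t" "t \<le> 1"
  shows "((1 - t) * x + t * y) ^ k \<le> (1 - t) * x ^ k + t * y ^ k"
proof -
  have "convex_on {0..} (\<lambda>x::real. x ^ k)"
  proof (cases "even k")
    case True then show ?thesis using convex_power_even convex_on_subset by blast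
  next
    case False then show ?thesis using convex_power_odd by blast
  qed
  from convex_onD[OF this, of t x y] assms show ?thesis by simp
qed

lemma cosh_sqrt_convex:
  fixes x y t :: real
  assumes "0 \<le> x" "0 \<le> y" "0 \<le> t" "t \<le> 1"
  shows "cosh (sqrt ((1 - t) * x + t * y)) \<le> (1 - t) * cosh (sqrt x) + t * cosh (sqrt y)"
proof -
  have z: "0 \<le> (1 - t) * x + t * y" using assms by simp
  have s2: "(\<lambda>n. (1 - t) * (if even n then x ^ (n div 2) / fact n else 0) + t * (if even n then y ^ (n div 2) / fact n else 0))
     sums ((1 - t) * cosh (sqrt x) + t * cosh (sqrt y))"
    by (intro sums_add sums_mult cosh_sqrt_sums assms)
  show ?thesis
  proof (rule sums_le[OF _ cosh_sqrt_sums[OF z] s2])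
    fix n
    show "(if even n then ((1 - t) * x + t * y) ^ (n div 2) / fact n else 0) \<le>
      (1 - t) * (if even n then x ^ (n div 2) / fact n else 0) + t * (if even n then y ^ (n div 2) / fact n else 0)"
    proof (cases "even n")
      case True
      have "((1 - t) * x + t * y) ^ (n div 2) / fact n \<le> ((1 - t) * x ^ (n div 2) + t * y ^ (n div 2)) / fact n"
        using pow_convex0[OF assms, of "n div 2"] by (intro divide_right_mono) auto
      also have "\<dots> = (1 - t) * (x ^ (n div 2) / fact n) + t * (y ^ (n div 2) / fact n)"
        by (simp add: field_simps)
      finally show ?thesis using True by simp
    qed simp
  qed
qed

lemma sinh_ge_self: "0 \<le> (s::real) \<Longrightarrow> s \<le> sinh s"
proof -
  assume s: "0 \<le> s"
  have "(\<lambda>s. sinh s - s) 0 \<le> (\<lambda>s. sinh s - s) s"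
  proof (rule deriv_nonneg_imp_mono[of 0 s _ "\<lambda>s. cosh s - 1"])
    fix x :: real
    show "((\<lambda>s. sinh s - s) has_real_derivative cosh x - 1) (at x)"
      by (rule derivative_eq_intros | simp)+
    show "0 \<le> cosh x - 1" using cosh_real_ge_1[of x] by simp
  qed (use s in auto)
  then show ?thesis by simp
qed

lemma exp_quad_bound: "0 \<le> (u::real) \<Longrightarrow> u \<le> 1/4 \<Longrightarrow> exp u \<le> 1 + u + 2/3 * u^2"
proof -
  assume u: "0 \<le> u" "u \<le> 1/4"
  have "(\<lambda>s. 1 + s + 2/3 * s^2 - exp s) 0 \<le> (\<lambda>s. 1 + s + 2/3 * s^2 - exp s) u"
  proof (rule deriv_nonneg_imp_mono[of 0 u _ "\<lambda>s. 1 + 4/3 * s - exp s"])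
    fix x :: real
    show "((\<lambda>s. 1 + s + 2/3 * s^2 - exp s) has_real_derivative 1 + 4/3 * x - exp x) (at x)"
      by (auto intro!: derivative_eq_intros simp: field_simps)
    assume x: "x \<in> {0..u}"
    have "exp x \<le> 1 + x + x^2" using exp_bound[of x] x u by auto
    also have "x^2 \<le> x * (1/3)"
    proof -
      have "x * x \<le> x * (1/3)" using x u by (intro mult_left_mono) auto
      then show ?thesis by (simp add: power2_eq_square)
    qed
    finally show "0 \<le> 1 + 4/3 * x - exp x" by simp
  qed (use u in auto)
  then show ?thesis by simp
qed

lemma scalar_key:
  fixes A S U :: real
  assumes A: "0 \<le> A" and S: "0 \<le> S" and U: "\<bar>U\<bar> \<le> S"
  shows "cosh (sqrt (A^2 + 2*A*U + S^2)) \<le> cosh A + U * sinh A + cosh A * (exp S - 1 - S)"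
proof (cases "S = 0")
  case True then show ?thesis using U A by simp
next
  case False
  with S have Sp: "0 < S" by simp
  define t where "t = (U + S) / (2 * S)"
  have t0: "0 \<le> t" "t \<le> 1" using U Sp by (auto simp: t_def field_simps)
  have Ueq: "U = (2*t - 1) * S" using Sp by (simp add: t_def field_simps)
  have xeq: "A^2 + 2*A*U + S^2 = (1 - t) * (A - S)^2 + t * (A + S)^2"
    by (simp add: Ueq power2_eq_square algebra_simps)
  have "cosh (sqrt (A^2 + 2*A*U + S^2)) \<le> (1 - t) * cosh (sqrt ((A - S)^2)) + t * cosh (sqrt ((A + S)^2))"
    unfolding xeq by (rule cosh_sqrt_convex) (use t0 in auto)
  also have "\<dots> = (1 - t) * cosh (A - S) + t * cosh (A + S)"
  proof -
    have ca: "cosh \<bar>z\<bar> = cosh z" for z :: real by (cases "z \<ge> 0") auto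
    show ?thesis using A S by (simp add: ca)
  qed
  also have "\<dots> = cosh A * cosh S + (2*t - 1) * sinh A * sinh S"
    by (simp add: cosh_add cosh_diff algebra_simps)
  also have "\<dots> \<le> cosh A + U * sinh A + cosh A * (exp S - 1 - S)"
  proof -
    have e: "exp S = cosh S + sinh S" by (simp add: cosh_plus_sinh)
    have ss: "S \<le> sinh S" using sinh_ge_self S by simp
    have sc: "sinh A \<le> cosh A" by (rule sinh_le_cosh_real)
    have sa: "0 \<le> sinh A" using A by simp
    have "(2*t - 1) * sinh A * (sinh S - S) \<le> cosh A * (sinh S - S)"
    proof -
      have "(2*t - 1) * sinh A \<le> sinh A" using t0 sa mult_right_mono[of "2*t - 1" 1 "sinh A"] by simp
      also have "\<dots> \<le> cosh A" by (rule sc)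
      finally show ?thesis using ss by (intro mult_right_mono) auto
    qed
    then show ?thesis unfolding e Ueq by (simp add: algebra_simps)
  qed
  finally show ?thesis .
qed

lemma vec_key:
  fixes z v :: "'a::real_inner" and l :: real
  assumes l: "0 \<le> l"
  shows "cosh (l * norm (z + v)) \<le> cosh (l * norm z) + (l * (inner z v / norm z)) * sinh (l * norm z)
           + cosh (l * norm z) * (exp (l * norm v) - 1 - l * norm v)"
proof -
  define U where "U = l * (inner z v / norm z)"
  have U: "\<bar>U\<bar> \<le> l * norm v"
  proof (cases "z = 0")
    case True then show ?thesis using l by (simp add: U_def)
  next
    case False
    have "\<bar>inner z v\<bar> / norm z \<le> norm v"
      using False Cauchy_Schwarz_ineq2[of z v] by (simp add: divide_le_eq mult.commute)
    from mult_left_mono[OF this l] show ?thesis using l by (simp add: U_def abs_mult)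
  qed
  have eq: "(l * norm z)^2 + 2 * (l * norm z) * U + (l * norm v)^2 = (l * norm (z + v))^2"
  proof (cases "z = 0")
    case True then show ?thesis by (simp add: U_def)
  next
    case False
    have "(norm (z + v))^2 = (norm z)^2 + 2 * inner z v + (norm v)^2"
      by (simp add: power2_norm_eq_inner inner_add_left inner_add_right inner_commute)
    then show ?thesis using False by (simp add: U_def power_mult_distrib power2_eq_square algebra_simps)
  qed
  have "cosh (sqrt ((l * norm z)^2 + 2 * (l * norm z) * U + (l * norm v)^2))
     \<le> cosh (l * norm z) + U * sinh (l * norm z) + cosh (l * norm z) * (exp (l * norm v) - 1 - l * norm v)"
    by (rule scalar_key) (use l U in auto)
  moreover have "sqrt ((l * norm z)^2 + 2 * (l * norm z) * U + (l * norm v)^2) = l * norm (z + v)"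
    unfolding eq using l by simp
  ultimately show ?thesis by (simp add: U_def)
qed

lemma two_point:
  fixes z c :: "'a::real_inner" and l p :: real
  assumes l: "0 \<le> l" and p: "0 \<le> p" "p \<le> 1" and th: "l * norm c \<le> 1/4"
  shows "p * cosh (l * norm (z + (1 - p) *\<^sub>R c)) + (1 - p) * cosh (l * norm (z + (- p) *\<^sub>R c))
         \<le> cosh (l * norm z) * exp (2/3 * p * (l * norm c)^2)"
proof -
  define th where "th = l * norm c"
  define Ch where "Ch = cosh (l * norm z)"
  define L where "L = l * (inner z c / norm z) * sinh (l * norm z)"
  have th0: "0 \<le> th" "th \<le> 1/4" using l th by (auto simp: th_def)
  have Ch0: "0 \<le> Ch" by (simp add: Ch_def)
  have a1: "l * (inner z ((1 - p) *\<^sub>R c) / norm z) * sinh (l * norm z) = (1 - p) * L"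
    by (simp add: L_def)
  have a2: "l * norm ((1 - p) *\<^sub>R c) = (1 - p) * th" using p by (simp add: th_def)
  have b1: "l * (inner z ((- p) *\<^sub>R c) / norm z) * sinh (l * norm z) = (- p) * L"
    by (simp add: L_def)
  have b2: "l * norm ((- p) *\<^sub>R c) = p * th" using p by (simp add: th_def)
  have k1: "cosh (l * norm (z + (1 - p) *\<^sub>R c)) \<le> Ch + (1 - p) * L + Ch * (exp ((1 - p) * th) - 1 - (1 - p) * th)"
    using vec_key[OF l, of z "(1 - p) *\<^sub>R c"] unfolding a1 a2 Ch_def by linarith
  have k2: "cosh (l * norm (z + (- p) *\<^sub>R c)) \<le> Ch + (- p) * L + Ch * (exp (p * th) - 1 - p * th)"
    using vec_key[OF l, of z "(- p) *\<^sub>R c"] unfolding b1 b2 Ch_def by linarith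
  have e1: "exp ((1 - p) * th) - 1 - (1 - p) * th \<le> 2/3 * ((1 - p) * th)^2"
    using exp_quad_bound[of "(1 - p) * th"] p th0 mult_left_le_one_le[of th "1 - p"] by auto
  have e2: "exp (p * th) - 1 - p * th \<le> 2/3 * (p * th)^2"
    using exp_quad_bound[of "p * th"] p th0 mult_left_le_one_le[of th p] by auto
  have "p * cosh (l * norm (z + (1 - p) *\<^sub>R c)) + (1 - p) * cosh (l * norm (z + (- p) *\<^sub>R c))
     \<le> p * (Ch + (1 - p) * L + Ch * (2/3 * ((1 - p) * th)^2)) + (1 - p) * (Ch + (- p) * L + Ch * (2/3 * (p * th)^2))"
  proof (intro add_mono mult_left_mono)
    show "cosh (l * norm (z + (1 - p) *\<^sub>R c)) \<le> Ch + (1 - p) * L + Ch * (2/3 * ((1 - p) * th)^2)"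
      using k1 mult_left_mono[OF e1 Ch0] by linarith
    show "cosh (l * norm (z + (- p) *\<^sub>R c)) \<le> Ch + (- p) * L + Ch * (2/3 * (p * th)^2)"
      using k2 mult_left_mono[OF e2 Ch0] by linarith
  qed (use p in auto)
  also have "\<dots> = Ch * (1 + 2/3 * th^2 * (p * (1 - p)))"
    by (simp add: power2_eq_square field_simps)
  also have "\<dots> \<le> Ch * (1 + 2/3 * p * th^2)"
  proof -
    have "p * (1 - p) \<le> p" using p mult_left_le[of "1 - p" p] by simp
    then have "2/3 * th^2 * (p * (1 - p)) \<le> 2/3 * th^2 * p" by (intro mult_left_mono) auto
    then show ?thesis using Ch0 by (intro mult_left_mono) (auto simp: algebra_simps)
  qed
  also have "\<dots> \<le> Ch * exp (2/3 * p * th^2)"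
    using Ch0 by (intro mult_left_mono) auto
  finally show ?thesis by (simp add: Ch_def th_def)
qed



lemma nn_step:
  fixes F :: "(nat \<Rightarrow> bool) \<Rightarrow> real"
  assumes I: "finite I" "j \<notin> I" and p: "0 \<le> p" "p \<le> 1" and F: "\<And>w. 0 \<le> F w"
  shows "(\<integral>\<^sup>+w. ennreal (F w) \<partial>Pi_pmf (insert j I) False (\<lambda>_. bernoulli_pmf p))
       = (\<integral>\<^sup>+f. ennreal (p * F (f(j:=True)) + (1 - p) * F (f(j:=False))) \<partial>Pi_pmf I False (\<lambda>_. bernoulli_pmf p))"
proof -
  let ?Q = "Pi_pmf I False (\<lambda>_. bernoulli_pmf p)"
  have "(\<integral>\<^sup>+w. ennreal (F w) \<partial>Pi_pmf (insert j I) False (\<lambda>_. bernoulli_pmf p))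
      = (\<integral>\<^sup>+y. \<integral>\<^sup>+f. ennreal (F (f(j:=y))) \<partial>?Q \<partial>bernoulli_pmf p)"
    by (simp add: Pi_pmf_insert[OF I] nn_integral_pair_pmf')
  also have "\<dots> = (\<integral>\<^sup>+f. ennreal (F (f(j:=True))) \<partial>?Q) * ennreal p + (\<integral>\<^sup>+f. ennreal (F (f(j:=False))) \<partial>?Q) * ennreal (1 - p)"
    using p by simp
  also have "\<dots> = (\<integral>\<^sup>+f. ennreal (F (f(j:=True))) * ennreal p \<partial>?Q) + (\<integral>\<^sup>+f. ennreal (F (f(j:=False))) * ennreal (1 - p) \<partial>?Q)"
    by (simp add: nn_integral_multc)
  also have "\<dots> = (\<integral>\<^sup>+f. ennreal (F (f(j:=True))) * ennreal p + ennreal (F (f(j:=False))) * ennreal (1 - p) \<partial>?Q)"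
    by (rule nn_integral_add[symmetric]) auto
  also have "\<dots> = (\<integral>\<^sup>+f. ennreal (p * F (f(j:=True)) + (1 - p) * F (f(j:=False))) \<partial>?Q)"
    using p F by (intro nn_integral_cong) (simp add: ennreal_mult' ennreal_plus[symmetric] mult.commute)
  finally show ?thesis .
qed

lemma conc:
  fixes c :: "nat \<Rightarrow> 'a::real_inner"
  assumes I: "finite I" and p: "0 \<le> p" "p \<le> 1" and l: "0 \<le> l" and th: "\<And>j. j \<in> I \<Longrightarrow> l * norm (c j) \<le> 1/4"
  shows "(\<integral>\<^sup>+w. ennreal (cosh (l * norm (\<Sum>j\<in>I. (of_bool (w j) - p) *\<^sub>R c j))) \<partial>Pi_pmf I False (\<lambda>_. bernoulli_pmf p))
         \<le> ennreal (exp (2/3 * p * (\<Sum>j\<in>I. (l * norm (c j))^2)))"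
  using I th
proof (induction I rule: finite_induct)
  case empty
  then show ?case by simp
next
  case (insert j I)
  let ?Q = "Pi_pmf I False (\<lambda>_. bernoulli_pmf p)"
  let ?V = "\<lambda>w. \<Sum>i\<in>I. (of_bool (w i) - p) *\<^sub>R c i"
  let ?E = "exp (2/3 * p * (l * norm (c j))^2)"
  have V: "(\<Sum>i\<in>insert j I. (of_bool ((f(j:=b)) i) - p) *\<^sub>R c i) = ?V f + (of_bool b - p) *\<^sub>R c j" for f b
  proof -
    have "(\<Sum>i\<in>I. (of_bool ((f(j:=b)) i) - p) *\<^sub>R c i) = ?V f"
      using insert.hyps by (intro sum.cong) auto
    then show ?thesis using insert.hyps by (simp add: add.commute)
  qed
  have "(\<integral>\<^sup>+w. ennreal (cosh (l * norm (\<Sum>i\<in>insert j I. (of_bool (w i) - p) *\<^sub>R c i))) \<partial>Pi_pmf (insert j I) False (\<lambda>_. bernoulli_pmf p))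
      = (\<integral>\<^sup>+f. ennreal (p * cosh (l * norm (?V f + (1 - p) *\<^sub>R c j)) + (1 - p) * cosh (l * norm (?V f + (- p) *\<^sub>R c j))) \<partial>?Q)"
    apply (subst nn_step[OF insert.hyps p])
     apply simp
    apply (simp only: V)
    apply simp
    done
  also have "\<dots> \<le> (\<integral>\<^sup>+f. ennreal (cosh (l * norm (?V f)) * ?E) \<partial>?Q)"
    by (intro nn_integral_mono ennreal_leI two_point l p) (use insert.prems in auto)
  also have "\<dots> = (\<integral>\<^sup>+f. ennreal (cosh (l * norm (?V f))) \<partial>?Q) * ennreal ?E"
    by (simp add: ennreal_mult' nn_integral_multc)
  also have "\<dots> \<le> ennreal (exp (2/3 * p * (\<Sum>i\<in>I. (l * norm (c i))^2))) * ennreal ?E"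
    by (intro mult_right_mono insert.IH) (use insert.prems in auto)
  also have "\<dots> = ennreal (exp (2/3 * p * (\<Sum>i\<in>insert j I. (l * norm (c i))^2)))"
    using insert.hyps by (simp add: ennreal_mult'[symmetric] exp_add[symmetric] algebra_simps)
  finally show ?case .
qed

lemma tail:
  fixes c :: "nat \<Rightarrow> 'a::real_inner"
  assumes I: "finite I" and p: "0 \<le> p" "p \<le> 1" and l: "0 \<le> l" and th: "\<And>j. j \<in> I \<Longrightarrow> l * norm (c j) \<le> 1/4"
    and t: "0 \<le> t"
  shows "measure_pmf.prob (Pi_pmf I False (\<lambda>_. bernoulli_pmf p)) {w. t \<le> norm (\<Sum>j\<in>I. (of_bool (w j) - p) *\<^sub>R c j)}
         \<le> 2 * exp (2/3 * p * (\<Sum>j\<in>I. (l * norm (c j))^2) - l * t)"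
proof -
  let ?Q = "Pi_pmf I False (\<lambda>_. bernoulli_pmf p)"
  let ?V = "\<lambda>w. \<Sum>j\<in>I. (of_bool (w j) - p) *\<^sub>R c j"
  let ?A = "{w. t \<le> norm (?V w)}"
  let ?B = "exp (2/3 * p * (\<Sum>j\<in>I. (l * norm (c j))^2))"
  define C where "C = cosh (l * t)"
  have C: "0 < C" by (simp add: C_def)
  have "emeasure ?Q ?A = (\<integral>\<^sup>+w. indicator ?A w \<partial>?Q)" by simp
  also have "\<dots> \<le> (\<integral>\<^sup>+w. ennreal (cosh (l * norm (?V w)) * (1 / C)) \<partial>?Q)"
  proof (intro nn_integral_mono)
    fix w
    show "indicator ?A w \<le> ennreal (cosh (l * norm (?V w)) * (1 / C))"
    proof (cases "w \<in> ?A")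
      case True
      then have "t \<le> norm (?V w)" by simp
      then have "l * t \<le> l * norm (?V w)" using l by (intro mult_left_mono) auto
      then have "C \<le> cosh (l * norm (?V w))"
        unfolding C_def using l t by (subst cosh_real_nonneg_le_iff) auto
      then have "1 \<le> cosh (l * norm (?V w)) * (1 / C)" using C by (simp add: field_simps)
      then show ?thesis using True by (simp add: ennreal_leI)
    qed simp
  qed
  also have "\<dots> = (\<integral>\<^sup>+w. ennreal (cosh (l * norm (?V w))) \<partial>?Q) * ennreal (1 / C)"
  proof -
    have "(\<integral>\<^sup>+w. ennreal (cosh (l * norm (?V w)) * (1 / C)) \<partial>?Q) = (\<integral>\<^sup>+w. ennreal (cosh (l * norm (?V w))) * ennreal (1 / C) \<partial>?Q)"
      using C by (intro nn_integral_cong ennreal_mult) auto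
    then show ?thesis by (simp add: nn_integral_multc)
  qed
  also have "\<dots> \<le> ennreal ?B * ennreal (1 / C)"
    by (intro mult_right_mono conc I p l th) auto
  also have "\<dots> = ennreal (?B / C)" using C by (simp add: ennreal_mult'[symmetric])
  finally have "measure_pmf.prob ?Q ?A \<le> ?B / C"
    using divide_pos_pos[OF exp_gt_zero C, of "2 * p * (\<Sum>j\<in>I. (l * norm (c j))\<^sup>2) / 3"]
    by (simp add: measure_pmf.emeasure_eq_measure ennreal_le_iff2 divide_nonneg_pos C)
  also have "\<dots> \<le> 2 * exp (2/3 * p * (\<Sum>j\<in>I. (l * norm (c j))^2) - l * t)"
  proof -
    have "exp (l * t) / 2 \<le> C" unfolding C_def cosh_def by (simp add: field_simps)
    then have "?B / C \<le> ?B / (exp (l * t) / 2)" using C by (intro divide_left_mono) auto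
    also have "\<dots> = 2 * exp (2/3 * p * (\<Sum>j\<in>I. (l * norm (c j))^2) - l * t)"
      by (simp only: exp_diff) (simp add: field_simps)
    finally show ?thesis .
  qed
  finally show ?thesis .
qed



lemma centroid_diff:
  fixes x :: "nat \<Rightarrow> 'a::real_normed_vector" and S W :: "nat set" and w :: "nat \<Rightarrow> bool"
  assumes S: "finite S" "S \<noteq> {}" and ne: "S \<inter> {i. w i} \<noteq> {}"
  shows "(\<Sum>j\<in>S. (of_bool (w j) - p) *\<^sub>R (x j - centroid x S))
         = real (card (S \<inter> {i. w i})) *\<^sub>R (centroid x (S \<inter> {i. w i}) - centroid x S)"
proof -
  let ?S' = "S \<inter> {i. w i}"
  have cS: "(\<Sum>j\<in>S. x j - centroid x S) = 0"
  proof -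
    have "card S > 0" using S by (simp add: card_gt_0_iff)
    then show ?thesis using S by (simp add: sum_subtractf centroid_def sum_constant_scaleR)
  qed
  have fin: "finite ?S'" using S by simp
  have c0: "card ?S' > 0" using fin ne by (simp add: card_gt_0_iff)
  have "(\<Sum>j\<in>S. (of_bool (w j) - p) *\<^sub>R (x j - centroid x S))
      = (\<Sum>j\<in>S. of_bool (w j) *\<^sub>R (x j - centroid x S)) - p *\<^sub>R (\<Sum>j\<in>S. x j - centroid x S)"
    by (simp add: scaleR_diff_left sum_subtractf scaleR_sum_right[symmetric])
  also have "(\<Sum>j\<in>S. of_bool (w j) *\<^sub>R (x j - centroid x S)) = (\<Sum>j\<in>?S'. x j - centroid x S)"
    using S by (simp add: sum.inter_restrict of_bool_def if_distrib[of "\<lambda>a. a *\<^sub>R _"] cong: if_cong)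
  also have "\<dots> = (\<Sum>j\<in>?S'. x j) - real (card ?S') *\<^sub>R centroid x S"
    by (simp add: sum_subtractf sum_constant_scaleR)
  also have "(\<Sum>j\<in>?S'. x j) = real (card ?S') *\<^sub>R centroid x ?S'"
    using c0 by (simp add: centroid_def)
  finally show ?thesis using cS by (simp add: scaleR_diff_right)
qed

lemma count_bad:
  fixes S :: "nat set"
  assumes S: "S \<subseteq> {..<n}" and p: "0 \<le> p" "p \<le> 1" and L: "0 \<le> L"
    and big: "p * real (card S) \<ge> 16 * L"
  shows "measure_pmf.prob (Pi_pmf {..<n} False (\<lambda>_. bernoulli_pmf p))
           {w. p * real (card S) / 2 \<le> \<bar>\<Sum>j\<in>S. (of_bool (w j) - p)\<bar>} \<le> 2 * exp (- (4/3) * L)"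
proof -
  define c :: "nat \<Rightarrow> real" where "c j = (if j \<in> S then 1 else 0)" for j
  have fS: "finite S" using S finite_subset by blast
  have eq: "(\<Sum>j\<in>S. (of_bool (w j) - p)) = (\<Sum>j<n. (of_bool (w j) - p) *\<^sub>R c j)" for w
    using S fS by (intro sum.mono_neutral_cong_left) (auto simp: c_def)
  have sq: "(\<Sum>j<n. (1/4 * norm (c j))^2) = real (card S) / 16"
  proof -
    have "(\<Sum>j<n. (1/4 * norm (c j))^2) = (\<Sum>j\<in>S. 1/16)"
      using S fS by (intro sum.mono_neutral_cong_right) (auto simp: c_def power2_eq_square)
    then show ?thesis by simp
  qed
  have "measure_pmf.prob (Pi_pmf {..<n} False (\<lambda>_. bernoulli_pmf p))
           {w. p * real (card S) / 2 \<le> norm (\<Sum>j<n. (of_bool (w j) - p) *\<^sub>R c j)}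
        \<le> 2 * exp (2/3 * p * (\<Sum>j<n. (1/4 * norm (c j))^2) - 1/4 * (p * real (card S) / 2))"
    by (rule tail) (use p in \<open>auto simp: c_def\<close>)
  also have "\<dots> \<le> 2 * exp (- (4/3) * L)"
    unfolding sq using big by simp
  finally show ?thesis unfolding eq[symmetric] by simp
qed

lemma vec_bad:
  fixes x :: "nat \<Rightarrow> 'a::real_inner"
  assumes S: "S \<subseteq> {..<n}" and p: "0 \<le> p" "p \<le> 1" and L: "0 \<le> L"
    and a: "0 < a" and M: "1 \<le> M" and rad: "\<And>j. j \<in> S \<Longrightarrow> norm (x j - centroid x S) \<le> a * M"
    and big: "p * real (card S) \<ge> 16 * M^2 * L"
  shows "measure_pmf.prob (Pi_pmf {..<n} False (\<lambda>_. bernoulli_pmf p))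
           {w. a * (p * real (card S)) / 2 \<le> norm (\<Sum>j\<in>S. (of_bool (w j) - p) *\<^sub>R (x j - centroid x S))}
         \<le> 2 * exp (- (4/3) * L)"
proof -
  define c where "c j = (if j \<in> S then x j - centroid x S else 0)" for j
  define l where "l = 1 / (4 * a * M^2)"
  have l0: "0 \<le> l" using a M by (simp add: l_def)
  have fS: "finite S" using S finite_subset by blast
  have eq: "(\<Sum>j\<in>S. (of_bool (w j) - p) *\<^sub>R (x j - centroid x S)) = (\<Sum>j<n. (of_bool (w j) - p) *\<^sub>R c j)" for w
    using S fS by (intro sum.mono_neutral_cong_left) (auto simp: c_def)
  have lc: "l * norm (c j) \<le> 1 / (4 * M)" for j
  proof (cases "j \<in> S")
    case True
    have "l * norm (c j) \<le> l * (a * M)" using rad[OF True] l0 True by (simp add: c_def mult_left_mono)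
    also have "\<dots> = 1 / (4 * M)" using a M by (simp add: l_def power2_eq_square field_simps)
    finally show ?thesis .
  qed (use M in \<open>simp add: c_def\<close>)
  have lc4: "l * norm (c j) \<le> 1/4" for j
    using lc[of j] M by (smt (verit) frac_le divide_le_eq_1 zero_less_divide_1_iff)
  have sq: "(\<Sum>j<n. (l * norm (c j))^2) \<le> real (card S) / (16 * M^2)"
  proof -
    have "(\<Sum>j<n. (l * norm (c j))^2) = (\<Sum>j\<in>S. (l * norm (c j))^2)"
      using S fS by (intro sum.mono_neutral_cong_right) (auto simp: c_def)
    also have "\<dots> \<le> (\<Sum>j\<in>S. (1 / (4 * M))^2)"
      using l0 by (intro sum_mono power_mono lc) auto
    also have "\<dots> = real (card S) / (16 * M^2)" by (simp add: power2_eq_square)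
    finally show ?thesis .
  qed
  have t0: "0 \<le> a * (p * real (card S)) / 2" using a p by simp
  have "measure_pmf.prob (Pi_pmf {..<n} False (\<lambda>_. bernoulli_pmf p))
           {w. a * (p * real (card S)) / 2 \<le> norm (\<Sum>j<n. (of_bool (w j) - p) *\<^sub>R c j)}
        \<le> 2 * exp (2/3 * p * (\<Sum>j<n. (l * norm (c j))^2) - l * (a * (p * real (card S)) / 2))"
    by (rule tail[OF _ p l0 lc4 t0]) simp
  also have "\<dots> \<le> 2 * exp (- (4/3) * L)"
  proof -
    have "2/3 * p * (\<Sum>j<n. (l * norm (c j))^2) \<le> 2/3 * p * (real (card S) / (16 * M^2))"
      using sq p by (intro mult_left_mono) auto
    moreover have "l * (a * (p * real (card S)) / 2) = p * real (card S) / (8 * M^2)"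
      using a M by (simp add: l_def field_simps)
    moreover have "2/3 * p * (real (card S) / (16 * M^2)) - p * real (card S) / (8 * M^2) = - (4/3) * (p * real (card S) / (16 * M^2))"
      by (simp add: field_simps)
    moreover have "L \<le> p * real (card S) / (16 * M^2)"
      using big M by (simp add: field_simps)
    ultimately show ?thesis by simp
  qed
  finally show ?thesis unfolding eq[symmetric] by simp
qed

lemma numeric_final:
  fixes k d eps :: real
  assumes k: "2 \<le> k" and d: "1 \<le> d" and eps: "0 < eps" "eps < 1"
  shows "k * (4 * exp (- (4/3) * ln (k * (d + 2) / eps))) \<le> eps"
proof -
  define y where "y = k * (d + 2) / eps"
  define L where "L = ln y"
  have y6: "6 \<le> y"
  proof -
    have "6 \<le> k * (d + 2)" using k d mult_mono[of 2 k 3 "d + 2"] by simp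
    also have "\<dots> \<le> k * (d + 2) / eps" using eps k d by (simp add: le_divide_eq)
    finally show ?thesis by (simp add: y_def)
  qed
  have ey: "exp L = y" using y6 by (simp add: L_def)
  have e3: "4/3 \<le> exp (L/3)"
  proof (rule ccontr)
    assume "\<not> 4/3 \<le> exp (L/3)"
    then have "exp (L/3) ^ 3 < (4/3) ^ 3" by (intro power_strict_mono) auto
    moreover have "exp (L/3) ^ 3 = exp L" by (simp add: exp_of_nat_mult[symmetric])
    ultimately show False using ey y6 by (simp add: power3_eq_cube)
  qed
  have e1: "exp (- (4/3) * L) = exp (- L) * exp (- (L/3))" by (simp add: exp_add[symmetric])
  have e2: "exp (- L) = 1 / y" using ey by (simp add: exp_minus inverse_eq_divide)
  have e4: "exp (- (L/3)) \<le> 3/4" using e3 by (simp add: exp_minus field_simps)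
  have "exp (- (4/3) * L) \<le> 1 / y * (3/4)" unfolding e1 e2 using e4 y6 by (intro mult_left_mono) auto
  then have "k * (4 * exp (- (4/3) * L)) \<le> k * (4 * (1 / y * (3/4)))" using k by (intro mult_left_mono) auto
  also have "\<dots> = 3 * eps / (d + 2)" using k d eps by (simp add: y_def divide_simps)
  also have "\<dots> \<le> eps" using d eps by (simp add: field_simps)
  finally show ?thesis by (simp add: L_def y_def)
qed



lemma ereal_inf_case: "0 < L \<Longrightarrow> \<not> ereal z \<ge> 16 * max 1 (\<infinity>^2) * ereal L"
  by (simp add: power2_eq_square max_def)

lemma ereal_fin_case: "16 * max 1 ((ereal y)^2) * ereal L = ereal (16 * max 1 (y^2) * L)"
  by (simp add: max_def)

lemma max_sq: "0 \<le> (y::real) \<Longrightarrow> max 1 (y^2) = (max 1 y)^2"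
proof (cases "y \<le> 1")
  case True
  assume "0 \<le> y"
  then have "y^2 \<le> 1" using True by (simp add: power_le_one)
  then show ?thesis using True by (simp add: max_def)
next
  case False
  then have "1 \<le> y^2" by (simp add: one_le_power)
  then show ?thesis using False by (simp add: max_def)
qed

theorem lemma16:
  fixes x :: "nat \<Rightarrow> real ^ 'd" and \<Gamma> :: "nat set set" and n :: nat
    and p \<epsilon> :: real
  assumes part: "partition_on {..<n} \<Gamma>"
    and k2: "card \<Gamma> \<ge> 2"
    and p: "0 < p" "p \<le> 1"
    and eps: "0 < \<epsilon>" "\<epsilon> < 1"
    and r_le: "max_rad x \<Gamma> \<le> min_sep x \<Gamma> / 2"
    and size: "ereal (p * real (min_size \<Gamma>))
       \<ge> 16 * max 1 ((sep_ratio (max_rad x \<Gamma>) (min_sep x \<Gamma>))^2)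
            * ereal (ln (real (card \<Gamma>) * (real CARD('d) + 2) / \<epsilon>))"
  shows "measure_pmf.prob (sample_pmf n p)
           {w. (\<forall>S\<in>\<Gamma>. S \<inter> {i. w i} \<noteq> {}) \<and>
               (\<forall>S\<in>\<Gamma>. \<forall>T\<in>\<Gamma>. S \<noteq> T \<longrightarrow> (\<forall>i\<in>S.
                  norm (x i - centroid x (S \<inter> {i. w i}))
                    < norm (x i - centroid x (T \<inter> {i. w i}))))}
         \<ge> 1 - \<epsilon>"
proof -
  define Q where "Q = sample_pmf n p"
  define D where "D = min_sep x \<Gamma>"
  define r where "r = max_rad x \<Gamma>"
  define a where "a = D / 2 - r"
  define k where "k = real (card \<Gamma>)"
  define d where "d = real CARD('d)"
  define L where "L = ln (k * (d + 2) / \<epsilon>)"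
  define E where "E = {w. (\<forall>S\<in>\<Gamma>. S \<inter> {i. w i} \<noteq> {}) \<and>
               (\<forall>S\<in>\<Gamma>. \<forall>T\<in>\<Gamma>. S \<noteq> T \<longrightarrow> (\<forall>i\<in>S.
                  norm (x i - centroid x (S \<inter> {i. w i}))
                    < norm (x i - centroid x (T \<inter> {i. w i}))))}"
  have Un: "\<Union>\<Gamma> = {..<n}" and emp: "{} \<notin> \<Gamma>" using part by (auto simp: partition_on_def)
  have finG: "finite \<Gamma>" by (rule finite_subset[of \<Gamma> "Pow {..<n}"]) (use Un in auto)
  have Ssub: "S \<subseteq> {..<n}" if "S \<in> \<Gamma>" for S using Un that by auto
  have Sne: "S \<noteq> {}" if "S \<in> \<Gamma>" for S using emp that by auto
  have finS: "finite S" if "S \<in> \<Gamma>" for S using Ssub[OF that] finite_subset by blast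
  have k2': "2 \<le> k" using k2 by (simp add: k_def)
  have d1: "1 \<le> d" by (simp add: d_def Suc_le_eq)
  obtain S0 where S0: "S0 \<in> \<Gamma>" using k2 by fastforce
  obtain i0 where i0: "i0 \<in> S0" using Sne[OF S0] by blast
  obtain S1 where S1: "S1 \<in> \<Gamma>" "S1 \<noteq> S0"
  proof -
    have "\<Gamma> \<noteq> {S0}" using k2 by auto
    then show ?thesis using that S0 by blast
  qed
  have finR: "finite {norm (x i - centroid x S) | S i. S \<in> \<Gamma> \<and> i \<in> S}"
  proof -
    have "{norm (x i - centroid x S) | S i. S \<in> \<Gamma> \<and> i \<in> S} \<subseteq> (\<lambda>(S, i). norm (x i - centroid x S)) ` (Sigma \<Gamma> (\<lambda>S. S))"
    proof
      fix v assume "v \<in> {norm (x i - centroid x S) | S i. S \<in> \<Gamma> \<and> i \<in> S}"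
      then obtain S i where "v = norm (x i - centroid x S)" "S \<in> \<Gamma>" "i \<in> S" by blast
      then show "v \<in> (\<lambda>(S, i). norm (x i - centroid x S)) ` (Sigma \<Gamma> (\<lambda>S. S))"
        by (intro image_eqI[of _ _ "(S, i)"]) auto
    qed
    moreover have "finite (Sigma \<Gamma> (\<lambda>S. S))" using finG finS by auto
    ultimately show ?thesis using finite_subset by blast
  qed
  have rad: "norm (x i - centroid x S) \<le> r" if "S \<in> \<Gamma>" "i \<in> S" for S i
    unfolding r_def max_rad_def
  proof (rule Max_ge[OF finR])
    show "norm (x i - centroid x S) \<in> {norm (x i - centroid x S) | S i. S \<in> \<Gamma> \<and> i \<in> S}"
      using that by blast
  qed
  have r0: "0 \<le> r" using rad[OF S0 i0] norm_ge_zero[of "x i0 - centroid x S0"] by linarith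
  have finD: "finite {norm (centroid x S - centroid x T) | S T. S \<in> \<Gamma> \<and> T \<in> \<Gamma> \<and> S \<noteq> T}"
  proof -
    have "{norm (centroid x S - centroid x T) | S T. S \<in> \<Gamma> \<and> T \<in> \<Gamma> \<and> S \<noteq> T} \<subseteq> (\<lambda>(S, T). norm (centroid x S - centroid x T)) ` (\<Gamma> \<times> \<Gamma>)"
    proof
      fix v assume "v \<in> {norm (centroid x S - centroid x T) | S T. S \<in> \<Gamma> \<and> T \<in> \<Gamma> \<and> S \<noteq> T}"
      then obtain S T where "v = norm (centroid x S - centroid x T)" "S \<in> \<Gamma>" "T \<in> \<Gamma>"
        by blast
      then show "v \<in> (\<lambda>(S, T). norm (centroid x S - centroid x T)) ` (\<Gamma> \<times> \<Gamma>)"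
        by (intro image_eqI[of _ _ "(S, T)"]) auto
    qed
    moreover have "finite ((\<lambda>(S, T). norm (centroid x S - centroid x T)) ` (\<Gamma> \<times> \<Gamma>))"
      using finG by (intro finite_imageI) simp
    ultimately show ?thesis by (rule finite_subset)
  qed
  have sep: "D \<le> norm (centroid x S - centroid x T)" if "S \<in> \<Gamma>" "T \<in> \<Gamma>" "S \<noteq> T" for S T
  proof -
    have mem: "norm (centroid x S - centroid x T) \<in> {norm (centroid x S - centroid x T) | S T. S \<in> \<Gamma> \<and> T \<in> \<Gamma> \<and> S \<noteq> T}"
      unfolding mem_Collect_eq
      apply (rule exI[of _ S])
      apply (rule exI[of _ T])
      using that by simp
    show ?thesis unfolding D_def min_sep_def by (rule Min_le[OF finD mem])
  qed
  have nmin: "min_size \<Gamma> \<le> card S" if "S \<in> \<Gamma>" for S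
    unfolding min_size_def by (rule Min_le) (use finG that in auto)
  have Lpos: "0 < L"
  proof -
    have "6 \<le> k * (d + 2)" using k2' d1 mult_mono[of 2 k 3 "d + 2"] by simp
    also have "\<dots> \<le> k * (d + 2) / \<epsilon>" using eps k2' d1 by (simp add: le_divide_eq)
    finally show ?thesis unfolding L_def by simp
  qed
  have size': "ereal (p * real (min_size \<Gamma>)) \<ge> 16 * max 1 ((sep_ratio r D)^2) * ereal L"
    using size by (simp add: r_def D_def L_def k_def d_def)
  have rlt: "r < D / 2"
  proof (rule ccontr)
    assume "\<not> r < D / 2"
    then have "r = D / 2" using r_le by (simp add: r_def D_def)
    then have "sep_ratio r D = \<infinity>" by (simp add: sep_ratio_def)
    then show False using size' ereal_inf_case[OF Lpos, of "p * real (min_size \<Gamma>)"] by simp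
  qed
  have a0: "0 < a" using rlt by (simp add: a_def)
  define \<rho> where "\<rho> = r / a"
  define M where "M = max 1 \<rho>"
  have rho0: "0 \<le> \<rho>" using r0 a0 by (simp add: \<rho>_def)
  have M1: "1 \<le> M" by (simp add: M_def)
  have rM: "r \<le> a * M"
  proof -
    have "r = a * \<rho>" using a0 by (simp add: \<rho>_def)
    also have "\<dots> \<le> a * M" using a0 by (intro mult_left_mono) (auto simp: M_def)
    finally show ?thesis .
  qed
  have bigmin: "16 * M^2 * L \<le> p * real (min_size \<Gamma>)"
  proof -
    have "sep_ratio r D = ereal \<rho>" using rlt by (simp add: sep_ratio_def \<rho>_def a_def)
    then have "ereal (16 * max 1 (\<rho>^2) * L) \<le> ereal (p * real (min_size \<Gamma>))"
      using size' by (simp only: ereal_fin_case)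
    moreover have "max 1 (\<rho>^2) = M^2"
      using rho0 by (simp add: M_def max_sq)
    ultimately show ?thesis by simp
  qed
  have big: "16 * M^2 * L \<le> p * real (card S)" if "S \<in> \<Gamma>" for S
  proof -
    have "p * real (min_size \<Gamma>) \<le> p * real (card S)" using nmin[OF that] p by (intro mult_left_mono) auto
    then show ?thesis using bigmin by linarith
  qed
  have big1: "16 * L \<le> p * real (card S)" if "S \<in> \<Gamma>" for S
  proof -
    have "16 * 1 * L \<le> 16 * M^2 * L" using M1 Lpos by (intro mult_right_mono mult_left_mono) (auto simp: one_le_power)
    then show ?thesis using big[OF that] by simp
  qed
  define U where "U (S::nat set) (w::nat \<Rightarrow> bool) = (\<Sum>j\<in>S. (of_bool (w j) - p))" for S w
  define V where "V S w = (\<Sum>j\<in>S. (of_bool (w j) - p) *\<^sub>R (x j - centroid x S))" for S w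
  define bad where "bad (S::nat set) = {w. p * real (card S) / 2 \<le> \<bar>U S w\<bar>} \<union> {w. a * (p * real (card S)) / 2 \<le> norm (V S w)}" for S
  have Qdef: "Q = Pi_pmf {..<n} False (\<lambda>_. bernoulli_pmf p)" by (simp add: Q_def sample_pmf_def)
  have pbad: "measure_pmf.prob Q (bad S) \<le> 4 * exp (- (4/3) * L)" if S: "S \<in> \<Gamma>" for S
  proof -
    have "measure_pmf.prob Q (bad S) \<le> measure_pmf.prob Q {w. p * real (card S) / 2 \<le> \<bar>U S w\<bar>}
         + measure_pmf.prob Q {w. a * (p * real (card S)) / 2 \<le> norm (V S w)}"
      unfolding bad_def by (rule measure_Un_le) auto
    also have "measure_pmf.prob Q {w. p * real (card S) / 2 \<le> \<bar>U S w\<bar>} \<le> 2 * exp (- (4/3) * L)"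
      unfolding Qdef U_def by (rule count_bad[OF Ssub[OF S]]) (use p Lpos big1[OF S] in auto)
    also have "measure_pmf.prob Q {w. a * (p * real (card S)) / 2 \<le> norm (V S w)} \<le> 2 * exp (- (4/3) * L)"
      unfolding Qdef V_def
    proof (rule vec_bad[OF Ssub[OF S]])
      show "norm (x j - centroid x S) \<le> a * M" if "j \<in> S" for j
        using rad[OF S that] rM by linarith
    qed (use p Lpos big[OF S] a0 M1 in auto)
    finally show ?thesis by simp
  qed
  have cl: "S \<inter> {i. w i} \<noteq> {} \<and> norm (centroid x (S \<inter> {i. w i}) - centroid x S) < a"
    if S: "S \<in> \<Gamma>" and nb: "w \<notin> bad S" for S w
  proof -
    let ?S' = "S \<inter> {i. w i}"
    let ?m = "real (card S)"
    have m0: "0 < card S" using finS[OF S] Sne[OF S] by (simp add: card_gt_0_iff)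
    have pm0: "0 < p * ?m" using p m0 by simp
    have u: "\<bar>U S w\<bar> < p * ?m / 2" and v: "norm (V S w) < a * (p * ?m) / 2"
      using nb by (auto simp: bad_def)
    have Ueq: "U S w = real (card ?S') - p * ?m"
      using finS[OF S] by (simp add: U_def sum_subtractf)
    have c1: "p * ?m / 2 < real (card ?S')" using u Ueq by linarith
    then have c0: "0 < card ?S'" using pm0 by linarith
    then have ne: "?S' \<noteq> {}" by auto
    have "V S w = real (card ?S') *\<^sub>R (centroid x ?S' - centroid x S)"
      unfolding V_def by (rule centroid_diff[OF finS[OF S] Sne[OF S] ne])
    then have "real (card ?S') * norm (centroid x ?S' - centroid x S) < a * (p * ?m) / 2"
      using v by simp
    also have "\<dots> < a * real (card ?S')" using c1 a0 by simp
    finally have "norm (centroid x ?S' - centroid x S) < a" using c0 by simp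
    then show ?thesis using ne by simp
  qed
  have good: "w \<in> E" if nb: "\<forall>S\<in>\<Gamma>. w \<notin> bad S" for w
  proof -
    have "S \<inter> {i. w i} \<noteq> {}" if "S \<in> \<Gamma>" for S using cl[OF that] nb that by blast
    moreover have "norm (x i - centroid x (S \<inter> {i. w i})) < norm (x i - centroid x (T \<inter> {i. w i}))"
      if ST: "S \<in> \<Gamma>" "T \<in> \<Gamma>" "S \<noteq> T" and i: "i \<in> S" for S T i
    proof -
      let ?cS = "centroid x S" and ?cT = "centroid x T"
      let ?cS' = "centroid x (S \<inter> {i. w i})" and ?cT' = "centroid x (T \<inter> {i. w i})"
      have hS: "norm (?cS' - ?cS) < a" using cl[OF ST(1)] nb ST by blast
      have hT: "norm (?cT' - ?cT) < a" using cl[OF ST(2)] nb ST by blast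
      have ri: "norm (x i - ?cS) \<le> r" using rad[OF ST(1) i] .
      have sd: "D \<le> norm (?cS - ?cT)" using sep[OF ST] .
      have t1: "norm (x i - ?cS') \<le> norm (x i - ?cS) + norm (?cS' - ?cS)"
        using norm_triangle_ineq[of "x i - ?cS" "?cS - ?cS'"] by (simp add: norm_minus_commute)
      have t2: "norm (?cS - ?cT) \<le> norm (x i - ?cS) + norm (x i - ?cT') + norm (?cT' - ?cT)"
      proof -
        have "norm (?cS - ?cT) \<le> norm (?cS - x i) + norm ((x i - ?cT') + (?cT' - ?cT))"
          using norm_triangle_ineq[of "?cS - x i" "(x i - ?cT') + (?cT' - ?cT)"] by simp
        also have "\<dots> \<le> norm (?cS - x i) + (norm (x i - ?cT') + norm (?cT' - ?cT))"
          using norm_triangle_ineq[of "x i - ?cT'" "?cT' - ?cT"] by simp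
        finally show ?thesis by (simp add: norm_minus_commute)
      qed
      show ?thesis using t1 t2 hS hT ri sd by (simp add: a_def)
    qed
    ultimately show ?thesis by (simp add: E_def)
  qed
  have sub: "UNIV - E \<subseteq> (\<Union>S\<in>\<Gamma>. bad S)" using good by blast
  have "measure_pmf.prob Q (UNIV - E) \<le> measure_pmf.prob Q (\<Union>S\<in>\<Gamma>. bad S)"
    using sub by (intro measure_pmf.finite_measure_mono) auto
  also have "\<dots> \<le> (\<Sum>S\<in>\<Gamma>. measure_pmf.prob Q (bad S))"
    using finG by (intro measure_pmf.finite_measure_subadditive_finite) auto
  also have "\<dots> \<le> (\<Sum>S\<in>\<Gamma>. 4 * exp (- (4/3) * L))"
    using pbad by (intro sum_mono) auto
  also have "\<dots> = k * (4 * exp (- (4/3) * L))" by (simp add: k_def)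
  also have "\<dots> \<le> \<epsilon>" unfolding L_def by (rule numeric_final[OF k2' d1 eps])
  finally have "measure_pmf.prob Q (UNIV - E) \<le> \<epsilon>" .
  moreover have "measure_pmf.prob Q (UNIV - E) = 1 - measure_pmf.prob Q E"
    using measure_pmf.prob_compl[of E Q] by simp
  ultimately show ?thesis by (simp add: Q_def E_def)
qed

end
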